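(* Let $(A_n)_{n\ge 0}$ and $(B_n)_{n\ge 0}$ be sequences of real numbers and let $(x_n)_{n\ge 0}$ be a solution of $$x_{n+10}=\frac{x_n}{A_n+B_n\,x_nx_{n+2}x_{n+4}x_{n+6}x_{n+8}},\qquad n\ge 0,$$ with initial values $x_0,\dots,x_9$, such that all terms are well-defined and nonzero. For $j\in\{0,1\}$ put $F_j=\dfrac{1}{x_jx_{j+2}x_{j+4}x_{j+6}x_{j+8}}$. Then for every $k\in\{0,1,\dots,9\}$ and every $n\ge 0$, $$x_{10n+k}=x_k\prod_{s=0}^{n-1}\frac{F_{\tau(k)}\prod\limits_{t=0}^{m_s-1}A_{2t+\tau(k)}+\sum\limits_{i=0}^{m_s-1}\Big(B_{2i+\tau(k)}\prod\limits_{l=i+1}^{m_s-1}A_{2l+\tau(k)}\Big)}{F_{\tau(k)}\prod\limits_{t=0}^{m_s}A_{2t+\tau(k)}+\sum\limits_{i=0}^{m_s}\Big(B_{2i+\tau(k)}\prod\limits_{l=i+1}^{m_s}A_{2l+\tau(k)}\Big)},$$ where $m_s=5s+\lfloor k/2\rfloor$.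
   Context: $\tau(k)\in\{0,1\}$ denotes the remainder of $k$ upon division by $2$ and $\lfloor\cdot\rfloor$ is the floor function, so $k=2\lfloor k/2\rfloor+\tau(k)$. Empty products equal $1$, empty sums equal $0$; for $n=0$ the outer product is empty. This equation is the forward shift by $9$ of $x_{n+1}=x_{n-9}/(a_n+b_nx_{n-1}x_{n-3}x_{n-5}x_{n-7}x_{n-9})$ with $A_n=a_{n+9}$, $B_n=b_{n+9}$. *)

theory Defs
  imports Complex_Main
begin

definition Fval :: "(nat \<Rightarrow> real) \<Rightarrow> nat \<Rightarrow> real" where
  "Fval x j = 1 / (x j * x (j+2) * x (j+4) * x (j+6) * x (j+8))"

definition Pexpr :: "(nat \<Rightarrow> real) \<Rightarrow> (nat \<Rightarrow> real) \<Rightarrow> real \<Rightarrow> nat \<Rightarrow> nat \<Rightarrow> real" where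
  "Pexpr A B F r m = F * (\<Prod>t<m. A (2*t + r))
     + (\<Sum>i<m. B (2*i + r) * (\<Prod>l\<in>{i+1..<m}. A (2*l + r)))"

end

theory Submission
  imports Defs
begin

lemma Pexpr_Suc:
  "Pexpr A B F r (Suc m) = A (2*m + r) * Pexpr A B F r m + B (2*m + r)"
proof -
  have "(\<Sum>i<Suc m. B (2*i + r) * (\<Prod>l\<in>{i+1..<Suc m}. A (2*l + r)))
     = (\<Sum>i<m. B (2*i + r) * (\<Prod>l\<in>{i+1..<Suc m}. A (2*l + r))) + B (2*m+r)"
    by simp
  also have "(\<Sum>i<m. B (2*i + r) * (\<Prod>l\<in>{i+1..<Suc m}. A (2*l + r)))
     = A (2*m+r) * (\<Sum>i<m. B (2*i + r) * (\<Prod>l\<in>{i+1..<m}. A (2*l + r)))"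
    unfolding sum_distrib_left
  proof (rule sum.cong)
    fix i assume "i \<in> {..<m}"
    then have "i + 1 \<le> m" by simp
    then show "B (2*i + r) * (\<Prod>l\<in>{i+1..<Suc m}. A (2*l + r))
       = A (2*m+r) * (B (2*i + r) * (\<Prod>l\<in>{i+1..<m}. A (2*l + r)))"
      by (simp add: prod.atLeastLessThan_Suc)
  qed simp
  finally show ?thesis unfolding Pexpr_def by (simp add: algebra_simps)
qed

theorem mainTheorem1:
  fixes A B x :: "nat \<Rightarrow> real"
  assumes nz: "\<And>n. x n \<noteq> 0"
    and den: "\<And>n. A n + B n * x n * x (n+2) * x (n+4) * x (n+6) * x (n+8) \<noteq> 0"
    and rec: "\<And>n. x (n+10) = x n / (A n + B n * x n * x (n+2) * x (n+4) * x (n+6) * x (n+8))"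
    and k: "k \<le> (9::nat)"
  shows "x (10*n + k) = x k * (\<Prod>s<n.
            Pexpr A B (Fval x (k mod 2)) (k mod 2) (5*s + k div 2)
          / Pexpr A B (Fval x (k mod 2)) (k mod 2) (5*s + k div 2 + 1))"
proof -
  define y where "y n = 1 / (x n * x (n+2) * x (n+4) * x (n+6) * x (n+8))" for n
  have ynz: "y n \<noteq> 0" for n using nz unfolding y_def by simp
  have ystep: "y (n+2) = A n * y n + B n" for n
  proof -
    have "y (n+2) = 1 / (x (n+2) * x (n+4) * x (n+6) * x (n+8) * x (n+10))"
      unfolding y_def by (simp only: add.assoc numeral_plus_numeral semiring_norm)
    also have "\<dots> = A n * y n + B n"
      unfolding rec y_def using nz[of n] nz[of "n+2"] nz[of "n+4"] nz[of "n+6"] nz[of "n+8"] den[of n]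
      by (simp add: field_simps)
    finally show ?thesis .
  qed
  have x10: "x (n+10) = x n * y n / y (n+2)" for n
  proof -
    have "y (n+2) = 1 / (x (n+2) * x (n+4) * x (n+6) * x (n+8) * x (n+10))"
      unfolding y_def by (simp only: add.assoc numeral_plus_numeral semiring_norm)
    then show ?thesis
      unfolding y_def using nz[of n] nz[of "n+2"] nz[of "n+4"] nz[of "n+6"] nz[of "n+8"] nz[of "n+10"]
      by (simp add: field_simps)
  qed
  have yP: "y (2*m + r) = Pexpr A B (y r) r m" for m r
  proof (induction m)
    case 0 then show ?case by (simp add: Pexpr_def)
  next
    case (Suc m)
    have "y (2 * Suc m + r) = y ((2*m + r) + 2)" by simp
    also have "\<dots> = A (2*m+r) * y (2*m+r) + B (2*m+r)" by (rule ystep)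
    finally show ?case using Suc by (simp add: Pexpr_Suc)
  qed
  have F: "Fval x (k mod 2) = y (k mod 2)" unfolding Fval_def y_def by simp
  show ?thesis
  proof (induction n)
    case 0 then show ?case by simp
  next
    case (Suc n)
    have e1: "10 * n + k = 2 * (5*n + k div 2) + k mod 2" by simp
    have e2: "10 * n + k + 2 = 2 * (5*n + k div 2 + 1) + k mod 2" by simp
    have "x (10 * Suc n + k) = x ((10*n+k) + 10)" by (simp add: algebra_simps)
    also have "\<dots> = x (10*n+k) * y (10*n+k) / y (10*n+k+2)" by (rule x10)
    also have "\<dots> = x (10*n+k) * (Pexpr A B (Fval x (k mod 2)) (k mod 2) (5*n + k div 2)
          / Pexpr A B (Fval x (k mod 2)) (k mod 2) (5*n + k div 2 + 1))"
    proof -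
      have "y (10*n+k) = Pexpr A B (y (k mod 2)) (k mod 2) (5*n + k div 2)"
        using yP[of "5*n + k div 2" "k mod 2"] by (subst e1) simp
      moreover have "y (10*n+k+2) = Pexpr A B (y (k mod 2)) (k mod 2) (5*n + k div 2 + 1)"
        using yP[of "5*n + k div 2 + 1" "k mod 2"] by (subst e2) simp
      ultimately show ?thesis unfolding F by simp
    qed
    finally show ?case using Suc by (simp add: mult.assoc)
  qed
qed

end
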